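(* Let $A$ be a semicircular Klaus–Shaw potential with support $[X_-,X_+]$. Then $\lambda\mapsto\Xi(\lambda)$ extends to an odd analytic function at $\lambda=0$ with convergent series $\Xi(\lambda)=\mathrm i\sum_{k=1}^\infty\Xi_k\lambda^{2k-1}$ near $0$, where the $\Xi_k$ are real and $\Xi_1=-(X_++X_-)$.
   Context: Let $X_-<X_+$. A semicircular Klaus–Shaw potential is $A:\mathbb R\to[0,\infty)$ such that: $A$ has support $[X_-,X_+]$ and $A(x)=u(x)\sqrt{(X_+-x)(x-X_-)}$ there, where $u\ge c>0$ on $[X_-,X_+]$ and $u$ extends analytically to a complex neighborhood of $[X_-,X_+]$; $A\in L^1\cap C^2(\mathbb R)$ with a unique maximizer $x_0$; $A''(x_0)<0$. $A_{\max}:=A(x_0)$; for $0<s<A_{\max}$, $x_-(s)<x_+(s)$ solve $A(x)=s$. The tail integral is $\Xi(\mathrm is):=(x_+(s)+x_-(s))s+\int_{-\infty}^{x_-(s)}(\sqrt{s^2-A(x)^2}-s)\,dx-\int_{x_+(s)}^{\infty}(\sqrt{s^2-A(x)^2}-s)\,dx$ for $0<s<A_{\max}$, viewed as a function of $\lambda=\mathrm is$. *)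

theory Defs
  imports "HOL-Complex_Analysis.Complex_Analysis"
begin

definition xminus :: "(real \<Rightarrow> real) \<Rightarrow> real \<Rightarrow> real" where
  "xminus A s = Min {x. A x = s}"

definition xplus :: "(real \<Rightarrow> real) \<Rightarrow> real \<Rightarrow> real" where
  "xplus A s = Max {x. A x = s}"

text \<open>The tail integral Xi(i s), for 0 < s < A_max.\<close>
definition Xi_tail :: "(real \<Rightarrow> real) \<Rightarrow> real \<Rightarrow> real" where
  "Xi_tail A s =
     (xplus A s + xminus A s) * s
     + integral {..xminus A s} (\<lambda>x. sqrt (s\<^sup>2 - (A x)\<^sup>2) - s)
     - integral {xplus A s..} (\<lambda>x. sqrt (s\<^sup>2 - (A x)\<^sup>2) - s)"

end

theory Submission
  imports Defs
begin


lemma termwise_int: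
  fixes d :: "nat \<Rightarrow> real" and h G :: "real \<Rightarrow> real"
  assumes hc: "continuous_on {0..1} h" and hb: "\<And>v. v \<in> {0..1} \<Longrightarrow> \<bar>h v\<bar> \<le> 1"
    and sd: "summable (\<lambda>n. \<bar>d n\<bar>)"
    and sG: "\<And>v. v \<in> {0..1} \<Longrightarrow> (\<lambda>n. d n * v ^ n) sums G v"
  shows "(\<lambda>n. d n * integral {0..1} (\<lambda>v. h v * v ^ n)) sums integral {0..1} (\<lambda>v. h v * G v)"
proof -
  have ul: "uniform_limit {0..1} (\<lambda>n v. \<Sum>i<n. h v * (d i * v ^ i)) (\<lambda>v. suminf (\<lambda>i. h v * (d i * v ^ i))) sequentially"
  proof (rule Weierstrass_m_test[OF _ sd])
    fix n and v :: real assume v: "v \<in> {0..1}"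
    have "\<bar>h v * (d n * v ^ n)\<bar> = \<bar>h v\<bar> * (\<bar>d n\<bar> * \<bar>v\<bar> ^ n)" by (simp add: abs_mult power_abs)
    also have "\<dots> \<le> 1 * (\<bar>d n\<bar> * 1)"
      using v hb[OF v] by (intro mult_mono) (auto intro!: power_le_one)
    finally show "norm (h v * (d n * v ^ n)) \<le> \<bar>d n\<bar>" by simp
  qed
  have eq: "suminf (\<lambda>i. h v * (d i * v ^ i)) = h v * G v" if "v \<in> {0..1}" for v
    using sums_mult[OF sG[OF that], of "h v"] by (simp add: sums_iff)
  have ul2: "uniform_limit {0..1} (\<lambda>n v. \<Sum>i<n. h v * (d i * v ^ i)) (\<lambda>v. h v * G v) sequentially"
    using ul uniform_limit_cong'[of "{0..1}" "\<lambda>n v. \<Sum>i<n. h v * (d i * v ^ i)" "\<lambda>n v. \<Sum>i<n. h v * (d i * v ^ i)" "\<lambda>v. suminf (\<lambda>i. h v * (d i * v ^ i))" "\<lambda>v. h v * G v" sequentially] eq by simp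
  have cont: "continuous_on {0..1} (\<lambda>v. \<Sum>i<n. h v * (d i * v ^ i))" for n
    by (intro continuous_intros hc)
  obtain I J where I: "\<And>n. ((\<lambda>v. \<Sum>i<n. h v * (d i * v ^ i)) has_integral I n) {0..1}"
    and J: "((\<lambda>v. h v * G v) has_integral J) {0..1}" and IJ: "I \<longlonglongrightarrow> J"
    using uniform_limit_integral[OF ul2 cont] by auto
  have hi: "((\<lambda>v. h v * (d i * v ^ i)) has_integral (d i * integral {0..1} (\<lambda>v. h v * v ^ i))) {0..1}" for i
  proof -
    have "(\<lambda>v. h v * v ^ i) integrable_on {0..1}"
      by (intro integrable_continuous_real continuous_intros hc)
    then have "((\<lambda>v. d i * (h v * v ^ i)) has_integral (d i * integral {0..1} (\<lambda>v. h v * v ^ i))) {0..1}"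
      by (intro has_integral_mult_right integrable_integral)
    then show ?thesis by (simp add: algebra_simps)
  qed
  have "I n = (\<Sum>i<n. d i * integral {0..1} (\<lambda>v. h v * v ^ i))" for n
    using has_integral_unique[OF I[of n] has_integral_sum[OF _ hi]] by auto
  then have "I = (\<lambda>n. \<Sum>i<n. d i * integral {0..1} (\<lambda>v. h v * v ^ i))" by (rule ext)
  then have "(\<lambda>n. \<Sum>i<n. d i * integral {0..1} (\<lambda>v. h v * v ^ i)) \<longlonglongrightarrow> J" using IJ by simp
  then show ?thesis using J by (simp add: sums_def integral_unique)
qed



lemma one_side:
  fixes A u :: "real \<Rightarrow> real" and g :: "complex \<Rightarrow> complex" and U :: "complex set" and Xm Xp c :: real
  assumes iv: "Xm < Xp" and nonneg: "\<forall>x. A x \<ge> 0"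
    and semicirc: "\<forall>x\<in>{Xm..Xp}. A x = u x * sqrt ((Xp - x) * (x - Xm))"
    and c_pos: "c > 0" and u_ge: "\<forall>x\<in>{Xm..Xp}. u x \<ge> c"
    and oU: "open U" and subU: "complex_of_real ` {Xm..Xp} \<subseteq> U" and holg: "g holomorphic_on U"
    and gu: "\<forall>x\<in>{Xm..Xp}. g (complex_of_real x) = complex_of_real (u x)"
    and cont: "continuous_on UNIV A"
  shows "\<exists>(\<alpha>::nat\<Rightarrow>real) (\<gamma>::nat\<Rightarrow>real) \<rho>. \<rho> > 0 \<and> \<alpha> 0 = Xm \<and> \<gamma> 0 = 0 \<and>
     (\<forall>t. 0 \<le> t \<and> t < \<rho> \<longrightarrow> summable (\<lambda>n. \<bar>\<alpha> n\<bar> * t^(2*n)) \<and> summable (\<lambda>n. \<bar>\<gamma> n\<bar> * t^(2*n+1))) \<and>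
     (\<forall>s y. 0 < s \<and> s < \<rho> \<and> Xm \<le> y \<and> A y = s \<and> (\<forall>x. Xm \<le> x \<and> x < y \<longrightarrow> A x < s) \<longrightarrow>
        (\<lambda>n. \<alpha> n * s^(2*n)) sums y \<and>
        (\<lambda>n. \<gamma> n * s^(2*n+1)) sums integral {Xm..y} (\<lambda>x. sqrt (s^2 - (A x)^2) - s))"
proof -
  have Asq: "(A x)^2 = (u x)^2 * ((Xp - x) * (x - Xm))" if "x \<in> {Xm..Xp}" for x
  proof -
    have "(Xp - x) * (x - Xm) \<ge> 0" using that by auto
    then show ?thesis using semicirc that by (simp add: power_mult_distrib)
  qed
  have upos: "u x > 0" if "x \<in> {Xm..Xp}" for x
    using u_ge c_pos that by (meson less_le_trans)
  have Apos: "A x > 0" if "x \<in> {Xm<..<Xp}" for x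
  proof -
    have "(Xp - x) * (x - Xm) > 0" using that by auto
    moreover have "u x > 0" using upos that by auto
    ultimately show ?thesis using semicirc that by simp
  qed
  have AXm: "A Xm = 0" using semicirc iv by simp
  define Fc where "Fc = (\<lambda>z. (g z)^2 * ((complex_of_real Xp - z) * (z - complex_of_real Xm)))"
  have holF: "Fc holomorphic_on U" unfolding Fc_def by (intro holomorphic_intros holg)
  have FcR: "Fc (complex_of_real x) = complex_of_real ((A x)^2)" if "x \<in> {Xm..Xp}" for x
    using gu that Asq[OF that] unfolding Fc_def by simp
  have XmU: "complex_of_real Xm \<in> U" using subU iv by auto
  obtain g' where g': "(g has_field_derivative g') (at (complex_of_real Xm))"
    using holomorphic_on_imp_differentiable_at[OF holg oU XmU] field_differentiable_def by blast
  have dF: "(Fc has_field_derivative (complex_of_real ((u Xm)^2 * (Xp - Xm)))) (at (complex_of_real Xm))"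
  proof -
    have "(Fc has_field_derivative (2 * g (complex_of_real Xm) * g' * ((complex_of_real Xp - complex_of_real Xm) * (complex_of_real Xm - complex_of_real Xm))
       + (g (complex_of_real Xm))^2 * ((- 1) * (complex_of_real Xm - complex_of_real Xm) + (complex_of_real Xp - complex_of_real Xm) * 1))) (at (complex_of_real Xm))"
      unfolding Fc_def by (rule derivative_eq_intros g' refl | simp)+
    then show ?thesis using gu iv by simp
  qed
  have dnz: "deriv Fc (complex_of_real Xm) \<noteq> 0"
  proof -
    have "u Xm > 0" using upos iv by auto
    then show ?thesis using DERIV_imp_deriv[OF dF] iv by simp
  qed
  obtain r0 where r0: "r0 > 0" "ball (complex_of_real Xm) r0 \<subseteq> U" "inj_on Fc (ball (complex_of_real Xm) r0)"
    using has_complex_derivative_locally_injective[OF holF XmU oU dnz] by blast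
  define B where "B = ball (complex_of_real Xm) r0"
  have oB: "open B" and injB: "inj_on Fc B" using r0 B_def by auto
  have holFB: "Fc holomorphic_on B" using holF r0 B_def holomorphic_on_subset by blast
  obtain \<psi> where psi_hol: "\<psi> holomorphic_on Fc ` B" and psiF: "\<And>z. z \<in> B \<Longrightarrow> \<psi> (Fc z) = z"
    using holomorphic_has_inverse[OF holFB oB injB] by metis
  have oFB: "open (Fc ` B)" using open_mapping_thm3[OF holFB oB injB] by simp
  have Fc0: "Fc (complex_of_real Xm) = 0" unfolding Fc_def by simp
  have "0 \<in> Fc ` B" using Fc0 r0 B_def by (metis centre_in_ball image_eqI)
  then obtain \<rho>1 where rho1: "\<rho>1 > 0" "ball 0 \<rho>1 \<subseteq> Fc ` B" using oFB open_contains_ball by blast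
  define \<delta> where "\<delta> = min (r0/2) ((Xp - Xm)/2)"
  have dpos: "\<delta> > 0" and dXp: "Xm + \<delta> < Xp" and dr0: "\<delta> < r0" using r0 iv unfolding \<delta>_def by (auto simp: min_def field_simps)
  have inB: "complex_of_real x \<in> B" if "x \<in> {Xm..Xm+\<delta>}" for x
  proof -
    have "dist (complex_of_real Xm) (complex_of_real x) = \<bar>Xm - x\<bar>"
      by (metis dist_of_real dist_real_def)
    then show ?thesis using that dr0 unfolding B_def by auto
  qed
  define m where "m = (A (Xm+\<delta>))^2"
  have mpos: "m > 0" unfolding m_def using Apos[of "Xm+\<delta>"] dpos dXp by simp
  define \<rho>w where "\<rho>w = min \<rho>1 m"
  have rwpos: "\<rho>w > 0" using mpos rho1 unfolding \<rho>w_def by simp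
  have pre: "Re (\<psi> (complex_of_real w)) \<in> {Xm..Xm+\<delta>} \<and> \<psi> (complex_of_real w) = complex_of_real (Re (\<psi> (complex_of_real w)))
      \<and> (A (Re (\<psi> (complex_of_real w))))^2 = w" if "0 \<le> w" "w < \<rho>w" for w
  proof -
    have "continuous_on {Xm..Xm+\<delta>} (\<lambda>x. (A x)^2)"
      by (intro continuous_intros continuous_on_subset[OF cont]) auto
    moreover have "(A Xm)^2 \<le> w" "w \<le> (A (Xm+\<delta>))^2" using that AXm m_def \<rho>w_def by auto
    ultimately obtain x where x: "Xm \<le> x" "x \<le> Xm+\<delta>" "(A x)^2 = w"
      using IVT'[of "\<lambda>x. (A x)^2" Xm w "Xm+\<delta>"] dpos by auto
    have "Fc (complex_of_real x) = complex_of_real w" using FcR[of x] x dXp by auto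
    then have "\<psi> (complex_of_real w) = complex_of_real x" using psiF[OF inB[of x]] x by auto
    then show ?thesis using x by simp
  qed
  have ballsub: "ball 0 \<rho>w \<subseteq> Fc ` B" using rho1 unfolding \<rho>w_def by auto
  have psi_ball: "\<psi> holomorphic_on ball 0 \<rho>w" using psi_hol ballsub holomorphic_on_subset by blast
  have dpsi_ball: "deriv \<psi> holomorphic_on ball 0 \<rho>w" by (intro holomorphic_deriv psi_ball open_ball)
  define a where "a n = (deriv ^^ n) \<psi> 0 / fact n" for n
  define D where "D n = (deriv ^^ n) (deriv \<psi>) 0 / fact n" for n
  have sa: "(\<lambda>n. a n * w^n) sums \<psi> w" if "w \<in> ball 0 \<rho>w" for w
    using holomorphic_power_series[OF psi_ball that] unfolding a_def by simp
  have sD: "(\<lambda>n. D n * w^n) sums deriv \<psi> w" if "w \<in> ball 0 \<rho>w" for w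
    using holomorphic_power_series[OF dpsi_ball that] unfolding D_def by simp
  have absgen: "summable (\<lambda>n. norm (b n) * t^n)"
    if sb: "\<And>w. w \<in> ball 0 \<rho>w \<Longrightarrow> summable (\<lambda>n. b n * w^n)" and t: "0 \<le> t" "t < \<rho>w" for b :: "nat \<Rightarrow> complex" and t
  proof -
    have "norm (complex_of_real ((t + \<rho>w)/2)) < \<rho>w" unfolding norm_of_real using t by auto
    then have "summable (\<lambda>n. b n * complex_of_real ((t + \<rho>w)/2) ^ n)" by (intro sb) auto
    moreover have "norm (complex_of_real t) < norm (complex_of_real ((t + \<rho>w)/2))"
      unfolding norm_of_real using t by auto
    ultimately have "summable (\<lambda>n. norm (b n * complex_of_real t ^ n))" by (rule powser_insidea)
    then show ?thesis using t by (simp add: norm_mult norm_power)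
  qed
  have absa: "summable (\<lambda>n. norm (a n) * t^n)" if "0 \<le> t" "t < \<rho>w" for t
    using absgen[of a t] sa sums_summable that by blast
  have absD: "summable (\<lambda>n. norm (D n) * t^n)" if "0 \<le> t" "t < \<rho>w" for t
    using absgen[of D t] sD sums_summable that by blast
  define h where "h v = sqrt (1 - v) - 1" for v :: real
  have hc: "continuous_on {0..1} h" unfolding h_def by (intro continuous_intros)
  have hb: "\<bar>h v\<bar> \<le> 1" if "v \<in> {0..1}" for v
  proof -
    have "sqrt (1 - v) \<le> 1" "sqrt (1 - v) \<ge> 0" using that by auto
    then show ?thesis unfolding h_def by linarith
  qed
  define cc where "cc n = integral {0..1} (\<lambda>v. h v * v^n)" for n
  have ccb: "\<bar>cc n\<bar> \<le> 1" for n
  proof -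
    have "norm (integral {0..1} (\<lambda>v. h v * v^n)) \<le> 1 * (1 - 0)"
    proof (rule integral_bound)
      show "continuous_on {0..1} (\<lambda>v. h v * v ^ n)" by (intro continuous_intros hc)
      fix v :: real assume v: "v \<in> {0..1}"
      have "\<bar>h v\<bar> * \<bar>v\<bar>^n \<le> 1 * 1" using hb[OF v] v by (intro mult_mono) (auto intro!: power_le_one)
      then show "norm (h v * v ^ n) \<le> 1" by (simp add: abs_mult power_abs)
    qed simp
    then show ?thesis unfolding cc_def by simp
  qed
  define \<alpha> where "\<alpha> n = Re (a n)" for n
  define \<gamma> where "\<gamma> n = (case n of 0 \<Rightarrow> 0 | Suc k \<Rightarrow> Re (D k) * cc k)" for n
  have psi0: "\<psi> 0 = complex_of_real Xm" using psiF[of "complex_of_real Xm"] Fc0 r0 B_def by simp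
  have \<alpha>0: "\<alpha> 0 = Xm" unfolding \<alpha>_def a_def using psi0 by simp
  have \<gamma>0: "\<gamma> 0 = 0" unfolding \<gamma>_def by simp
  have t2: "t^2 < \<rho>w" if "0 \<le> t" "t < sqrt \<rho>w" for t
  proof -
    have "t^2 < (sqrt \<rho>w)^2" using that by (intro power_strict_mono) auto
    then show ?thesis using rwpos by simp
  qed
  have summ: "summable (\<lambda>n. \<bar>\<alpha> n\<bar> * t^(2*n)) \<and> summable (\<lambda>n. \<bar>\<gamma> n\<bar> * t^(2*n+1))"
    if t: "0 \<le> t" "t < sqrt \<rho>w" for t
  proof
    show "summable (\<lambda>n. \<bar>\<alpha> n\<bar> * t^(2*n))"
    proof (rule summable_comparison_test'[OF absa[of "t^2"]])
      fix n
      have "\<bar>\<alpha> n\<bar> * t^(2*n) \<le> norm (a n) * (t^2)^n"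
        unfolding \<alpha>_def power_mult by (intro mult_right_mono abs_Re_le_cmod) (use t in auto)
      then show "norm (\<bar>\<alpha> n\<bar> * t^(2*n)) \<le> norm (a n) * (t^2)^n" using t by simp
    qed (use t t2 in auto)
    have "summable (\<lambda>n. \<bar>\<gamma> (Suc n)\<bar> * t^(2*(Suc n)+1))"
    proof (rule summable_comparison_test'[OF summable_mult[OF absD[of "t^2"], of "t^3"]])
      fix n
      have e: "2*(Suc n)+1 = 3 + 2*n" by simp
      have pw: "t^(2*(Suc n)+1) = t^3 * (t^2)^n" by (simp only: e power_add power_mult)
      have "\<bar>\<gamma> (Suc n)\<bar> * t^(2*(Suc n)+1) = (\<bar>Re (D n)\<bar> * \<bar>cc n\<bar>) * (t^3 * (t^2)^n)"
        unfolding \<gamma>_def pw by (simp add: abs_mult)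
      also have "\<dots> \<le> (norm (D n) * 1) * (t^3 * (t^2)^n)"
        using t by (intro mult_right_mono mult_mono abs_Re_le_cmod ccb) auto
      finally show "norm (\<bar>\<gamma> (Suc n)\<bar> * t^(2*(Suc n)+1)) \<le> t^3 * (norm (D n) * (t^2)^n)"
        using t by (simp add: mult_ac)
    qed (use t t2 in auto)
    then show "summable (\<lambda>n. \<bar>\<gamma> n\<bar> * t^(2*n+1))" by (rule summable_Suc_iff[THEN iffD1])
  qed
  have key: "(\<lambda>n. \<alpha> n * s^(2*n)) sums y \<and>
        (\<lambda>n. \<gamma> n * s^(2*n+1)) sums integral {Xm..y} (\<lambda>x. sqrt (s^2 - (A x)^2) - s)"
    if H: "0 < s" "s < sqrt \<rho>w" "Xm \<le> y" "A y = s" "\<forall>x. Xm \<le> x \<and> x < y \<longrightarrow> A x < s" for s y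
  proof
    have s2: "s^2 < \<rho>w" using t2[of s] H by auto
    define y' where "y' = Re (\<psi> (complex_of_real (s^2)))"
    have y': "y' \<in> {Xm..Xm+\<delta>}" "(A y')^2 = s^2" using pre[of "s^2"] s2 unfolding y'_def by auto
    have Ay': "A y' = s" using y'(2) nonneg H(1) by (metis less_imp_le power2_eq_imp_eq)
    have "y \<le> y'"
    proof (rule ccontr)
      assume "\<not> y \<le> y'"
      then have "A y' < s" using H(5) y'(1) by auto
      then show False using Ay' by simp
    qed
    then have yin: "y \<in> {Xm..Xm+\<delta>}" using y'(1) H(3) by auto
    have "Fc (complex_of_real y) = complex_of_real (s^2)" using FcR[of y] yin dXp H(4) by auto
    then have psiy: "\<psi> (complex_of_real (s^2)) = complex_of_real y" using psiF[OF inB[OF yin]] by simp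
    show "(\<lambda>n. \<alpha> n * s^(2*n)) sums y"
    proof -
      have "norm (complex_of_real (s^2)) < \<rho>w" unfolding norm_of_real using s2 by simp
      then have "complex_of_real (s^2) \<in> ball 0 \<rho>w" by (simp only: mem_ball_0)
      from sums_Re[OF sa[OF this]]
      have "(\<lambda>n. Re (a n * complex_of_real (s^2) ^ n)) sums y" using psiy by simp
      moreover have "Re (a n * complex_of_real (s^2) ^ n) = \<alpha> n * s^(2*n)" for n
        unfolding \<alpha>_def by (simp add: power_mult flip: of_real_power)
      ultimately show ?thesis by simp
    qed
    show "(\<lambda>n. \<gamma> n * s^(2*n+1)) sums integral {Xm..y} (\<lambda>x. sqrt (s^2 - (A x)^2) - s)"
    proof -
      define f where "f x = sqrt (s^2 - (A x)^2) - s" for x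
      define p where "p w = Re (\<psi> (complex_of_real w))" for w
      define G where "G v = Re (deriv \<psi> (complex_of_real (s^2 * v)))" for v
      define q where "q v = p (s^2 * v)" for v
      have wv: "0 \<le> s^2 * v \<and> s^2 * v < \<rho>w" if "v \<in> {0..1}" for v
      proof -
        have "s^2 * v \<le> s^2 * 1" using that by (intro mult_left_mono) auto
        then show ?thesis using that s2 by auto
      qed
      have inball: "complex_of_real w \<in> ball 0 \<rho>w" if "0 \<le> w" "w < \<rho>w" for w
      proof -
        have "norm (complex_of_real w) < \<rho>w" unfolding norm_of_real using that by simp
        then show ?thesis by (simp only: mem_ball_0)
      qed
      have pder: "(p has_real_derivative Re (deriv \<psi> (complex_of_real w))) (at w)" if "0 \<le> w" "w < \<rho>w" for w
      proof -
        have "(\<psi> has_field_derivative deriv \<psi> (complex_of_real w)) (at (complex_of_real w))"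
          using holomorphic_derivI[OF psi_ball open_ball inball[OF that]] by simp
        then have "((\<lambda>x. \<psi> (complex_of_real x)) has_vector_derivative deriv \<psi> (complex_of_real w)) (at w)"
          by (rule has_vector_derivative_real_field)
        then show ?thesis unfolding p_def has_vector_derivative_complex_iff by simp
      qed
      have qder: "(q has_real_derivative (G v * s^2)) (at v within {0..1})" if "v \<in> {0..1}" for v
      proof -
        have "((\<lambda>v. s^2 * v) has_real_derivative s^2) (at v within {0..1})"
          by (auto intro!: derivative_eq_intros)
        from DERIV_chain2[OF pder[of "s^2 * v"] this] wv[OF that]
        show ?thesis by (simp add: q_def[abs_def] G_def)
      qed
      have qrange: "q ` {0..1} \<subseteq> {Xm..Xm+\<delta>}"
        using pre wv unfolding q_def p_def by blast
      have fcont: "continuous_on {Xm..Xm+\<delta>} f"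
        unfolding f_def by (intro continuous_intros continuous_on_subset[OF cont]) auto
      have q0: "q 0 = Xm" using psi0 by (simp add: q_def p_def)
      have q1: "q 1 = y" using psiy by (simp add: q_def p_def)
      have sub: "((\<lambda>v. (G v * s^2) *\<^sub>R f (q v)) has_integral integral {q 0..q 1} f) {0..1}"
        by (rule has_integral_substitution[of 0 1 q Xm "Xm+\<delta>" f]) (use q0 q1 H qrange fcont qder in auto)
      have fq: "f (q v) = s * h v" if "v \<in> {0..1}" for v
      proof -
        have "(A (q v))^2 = s^2 * v" using pre[of "s^2 * v"] wv[OF that] by (simp add: q_def p_def)
        then have "f (q v) = sqrt (s^2 * (1 - v)) - s" by (simp add: f_def algebra_simps)
        also have "\<dots> = s * sqrt (1 - v) - s" using H(1) by (simp add: real_sqrt_mult)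
        finally show ?thesis by (simp add: h_def algebra_simps)
      qed
      have sub2: "((\<lambda>v. s^3 * (h v * G v)) has_integral integral {Xm..y} f) {0..1}"
      proof -
        have "((\<lambda>v. (G v * s^2) *\<^sub>R f (q v)) has_integral integral {Xm..y} f) {0..1}"
          using sub q0 q1 by simp
        moreover have "(G v * s^2) *\<^sub>R f (q v) = s^3 * (h v * G v)" if "v \<in> {0..1}" for v
          using fq[OF that] by (simp add: power2_eq_square power3_eq_cube)
        ultimately show ?thesis using has_integral_cong[of "{0..1}" "\<lambda>v. (G v * s^2) *\<^sub>R f (q v)" "\<lambda>v. s^3 * (h v * G v)"] by simp
      qed
      define d where "d n = Re (D n) * s^(2*n)" for n
      have sd: "summable (\<lambda>n. \<bar>d n\<bar>)"
      proof (rule summable_comparison_test'[OF absD[of "s^2"]])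
        fix n
        show "norm \<bar>d n\<bar> \<le> norm (D n) * (s^2)^n"
          unfolding d_def by (simp add: abs_mult power_mult abs_Re_le_cmod mult_right_mono)
      qed (use s2 in auto)
      have sG: "(\<lambda>n. d n * v^n) sums G v" if "v \<in> {0..1}" for v
      proof -
        from sums_Re[OF sD[OF inball[of "s^2 * v"]]] wv[OF that]
        have "(\<lambda>n. Re (D n * complex_of_real (s^2 * v) ^ n)) sums G v" by (simp add: G_def)
        moreover have "Re (D n * complex_of_real (s^2 * v) ^ n) = d n * v^n" for n
          unfolding d_def by (simp add: power_mult power_mult_distrib flip: of_real_power of_real_mult)
        ultimately show ?thesis by simp
      qed
      from termwise_int[OF hc hb sd sG]
      have "(\<lambda>n. d n * cc n) sums integral {0..1} (\<lambda>v. h v * G v)" unfolding cc_def by simp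
      then have "(\<lambda>n. s^3 * (d n * cc n)) sums (s^3 * integral {0..1} (\<lambda>v. h v * G v))" by (rule sums_mult)
      moreover have "s^3 * integral {0..1} (\<lambda>v. h v * G v) = integral {Xm..y} f"
        using integral_unique[OF sub2] by simp
      moreover have "s^3 * (d n * cc n) = \<gamma> (Suc n) * s^(2*(Suc n)+1)" for n
      proof -
        have e: "2*(Suc n)+1 = 3 + 2*n" by simp
        show ?thesis unfolding e power_add \<gamma>_def d_def by simp
      qed
      ultimately have "(\<lambda>n. \<gamma> (Suc n) * s^(2*(Suc n)+1)) sums integral {Xm..y} f" by simp
      then have "(\<lambda>n. \<gamma> n * s^(2*n+1)) sums (integral {Xm..y} f + \<gamma> 0 * s^(2*0+1))"
        by (rule sums_Suc_iff[THEN iffD1])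
      then show ?thesis using \<gamma>0 unfolding f_def by simp
    qed
  qed
  show ?thesis
  proof (rule exI[of _ \<alpha>], rule exI[of _ \<gamma>], rule exI[of _ "sqrt \<rho>w"], intro conjI allI impI)
    show "sqrt \<rho>w > 0" using rwpos by simp
    show "\<alpha> 0 = Xm" by (rule \<alpha>0)
    show "\<gamma> 0 = 0" using \<gamma>0 by simp
  next
    fix t assume "0 \<le> t \<and> t < sqrt \<rho>w"
    then show "summable (\<lambda>n. \<bar>\<alpha> n\<bar> * t^(2*n))"
      using summ by auto
  next
    fix t assume "0 \<le> t \<and> t < sqrt \<rho>w"
    then show "summable (\<lambda>n. \<bar>\<gamma> n\<bar> * t^(2*n+1))"
      using summ by auto
  next
    fix s y assume H: "0 < s \<and> s < sqrt \<rho>w \<and> Xm \<le> y \<and> A y = s \<and> (\<forall>x. Xm \<le> x \<and> x < y \<longrightarrow> A x < s)"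
    show "(\<lambda>n. \<alpha> n * s^(2*n)) sums y" using key[of s y] H by blast
  next
    fix s y assume H: "0 < s \<and> s < sqrt \<rho>w \<and> Xm \<le> y \<and> A y = s \<and> (\<forall>x. Xm \<le> x \<and> x < y \<longrightarrow> A x < s)"
    show "(\<lambda>n. \<gamma> n * s^(2*n+1)) sums integral {Xm..y} (\<lambda>x. sqrt (s^2 - (A x)^2) - s)" using key[of s y] H by blast
  qed
qed



lemma int_left:
  fixes f :: "real \<Rightarrow> real"
  assumes c: "continuous_on UNIV f" and z: "\<forall>x. x < Xm \<longrightarrow> f x = 0" and a: "Xm \<le> a"
  shows "integral {..a} f = integral {Xm..a} f"
proof -
  have "(f has_integral integral {Xm..a} f) {Xm..a}"
    by (intro integrable_integral integrable_continuous_real continuous_on_subset[OF c]) auto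
  then have "((\<lambda>x. if x \<in> {Xm..a} then f x else 0) has_integral integral {Xm..a} f) {..a}"
    by (subst has_integral_restrict) auto
  moreover have "\<And>x. x \<in> {..a} \<Longrightarrow> (if x \<in> {Xm..a} then f x else 0) = f x" using z by auto
  ultimately have "(f has_integral integral {Xm..a} f) {..a}"
    using has_integral_cong[of "{..a}" "\<lambda>x. if x \<in> {Xm..a} then f x else 0" f] by simp
  then show ?thesis by (rule integral_unique)
qed

lemma int_right:
  fixes f :: "real \<Rightarrow> real"
  assumes c: "continuous_on UNIV f" and z: "\<forall>x. x > Xp \<longrightarrow> f x = 0" and b: "b \<le> Xp"
  shows "integral {b..} f = integral {b..Xp} f"
proof -
  have "(f has_integral integral {b..Xp} f) {b..Xp}"
    by (intro integrable_integral integrable_continuous_real continuous_on_subset[OF c]) auto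
  then have "((\<lambda>x. if x \<in> {b..Xp} then f x else 0) has_integral integral {b..Xp} f) {b..}"
    by (subst has_integral_restrict) auto
  moreover have "\<And>x. x \<in> {b..} \<Longrightarrow> (if x \<in> {b..Xp} then f x else 0) = f x" using z by auto
  ultimately have "(f has_integral integral {b..Xp} f) {b..}"
    using has_integral_cong[of "{b..}" "\<lambda>x. if x \<in> {b..Xp} then f x else 0" f] by simp
  then show ?thesis by (rule integral_unique)
qed

theorem proposition2:
  fixes A u A' A'' :: "real \<Rightarrow> real" and Xm Xp c x0 :: real
  assumes interval: "Xm < Xp"
    and nonneg: "\<forall>x. A x \<ge> 0"
    and outside: "\<forall>x. x \<notin> {Xm..Xp} \<longrightarrow> A x = 0"
    and semicirc: "\<forall>x\<in>{Xm..Xp}. A x = u x * sqrt ((Xp - x) * (x - Xm))"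
    and c_pos: "c > 0" and u_ge: "\<forall>x\<in>{Xm..Xp}. u x \<ge> c"
    and u_analytic: "\<exists>U g. open U \<and> complex_of_real ` {Xm..Xp} \<subseteq> U \<and> g holomorphic_on U
                      \<and> (\<forall>x\<in>{Xm..Xp}. g (complex_of_real x) = complex_of_real (u x))"
    and L1: "integrable lborel A"
    and cont: "continuous_on UNIV A"
    and C2: "\<forall>x\<in>{Xm<..<Xp}. (A has_real_derivative A' x) (at x)
                              \<and> (A' has_real_derivative A'' x) (at x)"
    and C2_cont: "continuous_on {Xm<..<Xp} A''"
    and max: "\<forall>x. A x \<le> A x0"
    and max_unique: "\<forall>x. A x = A x0 \<longrightarrow> x = x0"
    and max_nondeg: "A'' x0 < 0"
    and two_levels: "\<forall>s. 0 < s \<and> s < A x0 \<longrightarrow> card {x. A x = s} = 2"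
  shows "\<exists>(XiC :: nat \<Rightarrow> real) r. r > 0 \<and>
           (\<forall>z::complex. norm z < r \<longrightarrow>
               summable (\<lambda>k. complex_of_real (XiC (Suc k)) * z ^ (2 * Suc k - 1))) \<and>
           (\<forall>s. 0 < s \<and> s < r \<and> s < A x0 \<longrightarrow>
               complex_of_real (Xi_tail A s)
                 = \<i> * (\<Sum>k. complex_of_real (XiC (Suc k)) * (\<i> * complex_of_real s) ^ (2 * Suc k - 1))) \<and>
           XiC 1 = - (Xp + Xm)"
proof -
  obtain U g where oU: "open U" and subU: "complex_of_real ` {Xm..Xp} \<subseteq> U" and holg: "g holomorphic_on U"
    and gu: "\<forall>x\<in>{Xm..Xp}. g (complex_of_real x) = complex_of_real (u x)"
    using u_analytic by blast
  obtain \<alpha> \<gamma> \<rho>L where rL: "\<rho>L > 0" and \<alpha>0: "\<alpha> 0 = Xm" and \<gamma>0: "\<gamma> 0 = 0"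
    and sumL: "\<forall>t. 0 \<le> t \<and> t < \<rho>L \<longrightarrow> summable (\<lambda>n. \<bar>\<alpha> n\<bar> * t^(2*n)) \<and> summable (\<lambda>n. \<bar>\<gamma> n\<bar> * t^(2*n+1))"
    and serL: "\<forall>s y. 0 < s \<and> s < \<rho>L \<and> Xm \<le> y \<and> A y = s \<and> (\<forall>x. Xm \<le> x \<and> x < y \<longrightarrow> A x < s) \<longrightarrow>
        (\<lambda>n. \<alpha> n * s^(2*n)) sums y \<and>
        (\<lambda>n. \<gamma> n * s^(2*n+1)) sums integral {Xm..y} (\<lambda>x. sqrt (s^2 - (A x)^2) - s)"
    using one_side[OF interval nonneg semicirc c_pos u_ge oU subU holg gu cont] by blast
  have iv': "-Xp < -Xm" using interval by simp
  have nonneg': "\<forall>x. A (-x) \<ge> 0" using nonneg by simp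
  have semicirc': "\<forall>x\<in>{-Xp..-Xm}. A (-x) = u (-x) * sqrt ((-Xm - x) * (x - -Xp))"
  proof
    fix x :: real assume "x \<in> {-Xp..-Xm}"
    then have "-x \<in> {Xm..Xp}" by auto
    then have "A (-x) = u (-x) * sqrt ((Xp - -x) * (-x - Xm))" using semicirc by blast
    also have "(Xp - -x) * (-x - Xm) = (-Xm - x) * (x - -Xp)" by (simp add: algebra_simps)
    finally show "A (-x) = u (-x) * sqrt ((-Xm - x) * (x - -Xp))" .
  qed
  have u_ge': "\<forall>x\<in>{-Xp..-Xm}. u (-x) \<ge> c" using u_ge by auto
  have oU': "open ((\<lambda>z. -z) ` U)" by (rule open_negations[OF oU])
  have subU': "complex_of_real ` {-Xp..-Xm} \<subseteq> (\<lambda>z. -z) ` U"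
  proof
    fix w assume "w \<in> complex_of_real ` {-Xp..-Xm}"
    then obtain x where x: "x \<in> {-Xp..-Xm}" "w = complex_of_real x" by blast
    then have "complex_of_real (-x) \<in> U" using subU by auto
    then show "w \<in> (\<lambda>z. -z) ` U" using x by (metis image_eqI minus_minus of_real_minus)
  qed
  have holg': "(\<lambda>z. g (-z)) holomorphic_on (\<lambda>z. -z) ` U"
  proof -
    have "(g \<circ> (\<lambda>z. -z)) holomorphic_on (\<lambda>z. -z) ` U"
      by (rule holomorphic_on_compose) (auto intro!: holomorphic_intros simp: image_image holg)
    then show ?thesis by (simp add: o_def)
  qed
  have gu': "\<forall>x\<in>{-Xp..-Xm}. g (- complex_of_real x) = complex_of_real (u (-x))"
    using gu by (metis add.inverse_inverse atLeastAtMost_iff neg_le_iff_le of_real_minus)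
  have cont': "continuous_on UNIV (\<lambda>x. A (-x))"
    by (rule continuous_on_compose2[OF cont]) (auto intro: continuous_intros)
  obtain \<alpha>' \<gamma>' \<rho>R where rR: "\<rho>R > 0" and \<alpha>'0: "\<alpha>' 0 = -Xp" and \<gamma>'0: "\<gamma>' 0 = 0"
    and sumR: "\<forall>t. 0 \<le> t \<and> t < \<rho>R \<longrightarrow> summable (\<lambda>n. \<bar>\<alpha>' n\<bar> * t^(2*n)) \<and> summable (\<lambda>n. \<bar>\<gamma>' n\<bar> * t^(2*n+1))"
    and serR: "\<forall>s y. 0 < s \<and> s < \<rho>R \<and> -Xp \<le> y \<and> A (-y) = s \<and> (\<forall>x. -Xp \<le> x \<and> x < y \<longrightarrow> A (-x) < s) \<longrightarrow>
        (\<lambda>n. \<alpha>' n * s^(2*n)) sums y \<and>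
        (\<lambda>n. \<gamma>' n * s^(2*n+1)) sums integral {-Xp..y} (\<lambda>x. sqrt (s^2 - (A (-x))^2) - s)"
    using one_side[of "-Xp" "-Xm" "\<lambda>x. A (-x)" "\<lambda>x. u (-x)" c "(\<lambda>z. -z) ` U" "\<lambda>z. g (-z)",
        OF iv' nonneg' semicirc' c_pos u_ge' oU' subU' holg' gu' cont'] by blast
  have AXm: "A Xm = 0" and AXp: "A Xp = 0" using semicirc interval by auto
  have upos: "u x > 0" if "x \<in> {Xm..Xp}" for x
    using u_ge c_pos that by (meson less_le_trans)
  have Ax0: "A x0 > 0"
  proof -
    define mid where "mid = (Xm + Xp) / 2"
    have mid: "mid \<in> {Xm..Xp}" "(Xp - mid) * (mid - Xm) > 0" using interval unfolding mid_def by auto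
    then have "A mid > 0" using semicirc upos[OF mid(1)] by simp
    then show ?thesis using max by (meson less_le_trans)
  qed
  have x0in: "Xm < x0" "x0 < Xp"
  proof -
    have "x0 \<in> {Xm..Xp}" using outside Ax0 by force
    moreover have "x0 \<noteq> Xm" "x0 \<noteq> Xp" using AXm AXp Ax0 by auto
    ultimately show "Xm < x0" "x0 < Xp" by auto
  qed
  have lev: "\<exists>a b. Xm < a \<and> a < x0 \<and> x0 < b \<and> b < Xp \<and> {x. A x = s} = {a,b} \<and>
      (\<forall>x. Xm \<le> x \<and> x < a \<longrightarrow> A x < s) \<and> (\<forall>x. b < x \<and> x \<le> Xp \<longrightarrow> A x < s)"
    if s: "0 < s" "s < A x0" for s
  proof -
    have cA: "continuous_on S A" for S using cont continuous_on_subset by blast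
    obtain a where a: "Xm \<le> a" "a \<le> x0" "A a = s"
      using IVT'[of A Xm s x0, OF _ _ _ cA] AXm s x0in by auto
    obtain b where b: "x0 \<le> b" "b \<le> Xp" "A b = s"
      using IVT2'[of A Xp s x0, OF _ _ _ cA] AXp s x0in by auto
    have a2: "Xm < a" "a < x0" using a AXm s by (auto simp: le_less)
    have b2: "x0 < b" "b < Xp" using b AXp s by (auto simp: le_less)
    define L where "L = {x. A x = s}"
    have cL: "card L = 2" using two_levels s unfolding L_def by auto
    then have fL: "finite L" by (metis card.infinite zero_neq_numeral)
    have "{a,b} \<subseteq> L" using a b unfolding L_def by auto
    moreover have "card {a,b} = 2" using a2 b2 by auto
    ultimately have Lab: "L = {a,b}" using card_subset_eq[OF fL] cL by metis
    have left: "A x < s" if x: "Xm \<le> x" "x < a" for x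
    proof (rule ccontr)
      assume "\<not> A x < s"
      then obtain z where z: "Xm \<le> z" "z \<le> x" "A z = s"
        using IVT'[of A Xm s x, OF _ _ _ cA] AXm s x by auto
      then have "z \<in> L" unfolding L_def by simp
      then show False using Lab z x a2 b2 by auto
    qed
    have right: "A x < s" if x: "b < x" "x \<le> Xp" for x
    proof (rule ccontr)
      assume "\<not> A x < s"
      then obtain z where z: "x \<le> z" "z \<le> Xp" "A z = s"
        using IVT2'[of A Xp s x, OF _ _ _ cA] AXp s x by auto
      then have "z \<in> L" unfolding L_def by simp
      then show False using Lab z x a2 b2 by auto
    qed
    show ?thesis using a2 b2 Lab left right unfolding L_def by blast
  qed
  define e where "e n = \<alpha> n - \<alpha>' n + \<gamma> n - \<gamma>' n" for n
  define XiC where "XiC k = (case k of 0 \<Rightarrow> 0 | Suc j \<Rightarrow> (-1)^(Suc j) * e j)" for k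
  define r where "r = min \<rho>L \<rho>R"
  have rpos: "r > 0" using rL rR unfolding r_def by simp
  have expo: "2 * Suc k - 1 = 2 * k + 1" for k by simp
  show ?thesis
  proof (rule exI[of _ XiC], rule exI[of _ r], intro conjI allI impI)
    show "r > 0" by (rule rpos)
    show "XiC 1 = - (Xp + Xm)" unfolding XiC_def e_def using \<alpha>0 \<alpha>'0 \<gamma>0 \<gamma>'0 by simp
  next
    fix z :: complex assume z: "norm z < r"
    define t where "t = norm z"
    have t: "0 \<le> t" "t < \<rho>L" "t < \<rho>R" using z unfolding t_def r_def by auto
    have s1: "summable (\<lambda>n. (\<bar>\<alpha> n\<bar> * t^(2*n)) * t + (\<bar>\<alpha>' n\<bar> * t^(2*n)) * t + \<bar>\<gamma> n\<bar> * t^(2*n+1) + \<bar>\<gamma>' n\<bar> * t^(2*n+1))"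
      using sumL sumR t by (intro summable_add summable_mult2) auto
    have "summable (\<lambda>k. norm (complex_of_real (XiC (Suc k)) * z ^ (2 * Suc k - 1)))"
    proof (rule summable_comparison_test'[OF s1])
      fix n
      have "norm (norm (complex_of_real (XiC (Suc n)) * z ^ (2 * Suc n - 1))) = \<bar>e n\<bar> * t^(2*n+1)"
        unfolding expo XiC_def t_def by (simp add: norm_mult norm_power abs_mult)
      also have "\<dots> \<le> (\<bar>\<alpha> n\<bar> + \<bar>\<alpha>' n\<bar> + \<bar>\<gamma> n\<bar> + \<bar>\<gamma>' n\<bar>) * t^(2*n+1)"
        unfolding e_def using t by (intro mult_right_mono) auto
      also have "\<dots> = (\<bar>\<alpha> n\<bar> * t^(2*n)) * t + (\<bar>\<alpha>' n\<bar> * t^(2*n)) * t + \<bar>\<gamma> n\<bar> * t^(2*n+1) + \<bar>\<gamma>' n\<bar> * t^(2*n+1)"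
        by (simp add: algebra_simps)
      finally show "norm (norm (complex_of_real (XiC (Suc n)) * z ^ (2 * Suc n - 1))) \<le> \<dots>" .
    qed
    then show "summable (\<lambda>k. complex_of_real (XiC (Suc k)) * z ^ (2 * Suc k - 1))"
      by (rule summable_norm_cancel)
  next
    fix s assume s: "0 < s \<and> s < r \<and> s < A x0"
    then obtain a b where ab: "Xm < a" "a < x0" "x0 < b" "b < Xp" "{x. A x = s} = {a,b}"
      "\<forall>x. Xm \<le> x \<and> x < a \<longrightarrow> A x < s" "\<forall>x. b < x \<and> x \<le> Xp \<longrightarrow> A x < s"
      using lev by blast
    have xm: "xminus A s = a" and xp: "xplus A s = b"
      unfolding xminus_def xplus_def using ab by auto
    define f where "f x = sqrt (s^2 - (A x)^2) - s" for x
    have fc: "continuous_on UNIV f" unfolding f_def by (intro continuous_intros cont)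
    have f0: "f x = 0" if "x \<notin> {Xm..Xp}" for x using outside that s unfolding f_def by simp
    have IL: "integral {..a} f = integral {Xm..a} f"
      by (rule int_left[OF fc]) (use f0 ab in auto)
    have IR: "integral {b..} f = integral {-Xp..-b} (\<lambda>x. f (-x))"
    proof -
      have "integral {b..} f = integral {b..Xp} f"
        by (rule int_right[OF fc]) (use f0 ab in auto)
      also have "\<dots> = integral {-Xp..-b} (\<lambda>x. f (-x))"
      proof -
        have "(f has_integral integral {b..Xp} f) {b..Xp}"
          by (intro integrable_integral integrable_continuous_real continuous_on_subset[OF fc]) auto
        then have "((\<lambda>x. f (-x)) has_integral integral {b..Xp} f) {-Xp..-b}"
          by (simp only: has_integral_reflect_real)
        then show ?thesis by (rule integral_unique[symmetric])
      qed
      finally show ?thesis .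
    qed
    have Xi: "Xi_tail A s = (b + a) * s + integral {Xm..a} f - integral {-Xp..-b} (\<lambda>x. f (-x))"
      unfolding Xi_tail_def xm xp using IL IR unfolding f_def by simp
    have L: "(\<lambda>n. \<alpha> n * s^(2*n)) sums a \<and> (\<lambda>n. \<gamma> n * s^(2*n+1)) sums integral {Xm..a} f"
      using serL[rule_format, of s a] s ab unfolding r_def f_def by auto
    have R: "(\<lambda>n. \<alpha>' n * s^(2*n)) sums (-b) \<and> (\<lambda>n. \<gamma>' n * s^(2*n+1)) sums integral {-Xp..-b} (\<lambda>x. f (-x))"
      using serR[rule_format, of s "-b"] s ab unfolding r_def f_def by auto
    have "(\<lambda>n. (\<alpha> n * s^(2*n)) * s - (\<alpha>' n * s^(2*n)) * s + \<gamma> n * s^(2*n+1) - \<gamma>' n * s^(2*n+1))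
        sums (a * s - (-b) * s + integral {Xm..a} f - integral {-Xp..-b} (\<lambda>x. f (-x)))"
      using L R by (intro sums_add sums_diff sums_mult2) auto
    moreover have "(\<alpha> n * s^(2*n)) * s - (\<alpha>' n * s^(2*n)) * s + \<gamma> n * s^(2*n+1) - \<gamma>' n * s^(2*n+1) = e n * s^(2*n+1)" for n
      unfolding e_def by (simp add: algebra_simps)
    ultimately have ser: "(\<lambda>n. e n * s^(2*n+1)) sums Xi_tail A s" unfolding Xi by (simp add: algebra_simps)
    then have "(\<lambda>n. complex_of_real (e n * s^(2*n+1))) sums complex_of_real (Xi_tail A s)"
      by (simp only: sums_of_real_iff)
    then have ser2: "(\<lambda>n. - \<i> * complex_of_real (e n * s^(2*n+1))) sums (- \<i> * complex_of_real (Xi_tail A s))"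
      by (rule sums_mult)
    have termeq: "complex_of_real (XiC (Suc k)) * (\<i> * complex_of_real s) ^ (2 * Suc k - 1)
        = - \<i> * complex_of_real (e k * s^(2*k+1))" for k
    proof -
      have "(\<i> * complex_of_real s) ^ (2 * Suc k - 1) = \<i> * (-1)^k * complex_of_real s ^ (2*k+1)"
        unfolding expo by (simp add: power_mult_distrib power_add power_mult power_minus[of "(complex_of_real s)^2"])
      note P = this
      have X: "complex_of_real (XiC (Suc k)) = - ((-1)^k) * complex_of_real (e k)" by (simp add: XiC_def)
      have m: "((-1::complex)^k) * ((-1)^k) = 1" by (simp flip: power_mult_distrib)
      have "complex_of_real (XiC (Suc k)) * (\<i> * complex_of_real s) ^ (2 * Suc k - 1)
          = (- ((-1)^k) * complex_of_real (e k)) * (\<i> * (-1)^k * complex_of_real s ^ (2*k+1))"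
        by (simp only: X P)
      also have "\<dots> = - \<i> * (((-1)^k * (-1)^k) * (complex_of_real (e k) * complex_of_real s ^ (2*k+1)))"
        by (simp add: algebra_simps)
      also have "\<dots> = - \<i> * complex_of_real (e k * s^(2*k+1))" by (simp add: m)
      finally show ?thesis .
    qed
    have "(\<lambda>k. complex_of_real (XiC (Suc k)) * (\<i> * complex_of_real s) ^ (2 * Suc k - 1))
        sums (- \<i> * complex_of_real (Xi_tail A s))"
      unfolding termeq by (rule ser2)
    then have "(\<Sum>k. complex_of_real (XiC (Suc k)) * (\<i> * complex_of_real s) ^ (2 * Suc k - 1))
        = - \<i> * complex_of_real (Xi_tail A s)" by (rule sums_unique[symmetric])
    then show "complex_of_real (Xi_tail A s)
        = \<i> * (\<Sum>k. complex_of_real (XiC (Suc k)) * (\<i> * complex_of_real s) ^ (2 * Suc k - 1))"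
      by simp
  qed
qed

end
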